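(* Let $T$ be a (possibly unbounded) linear operator in a separable Banach space $X$, and let $D(T^\infty):=\bigcap_{n\ge0}D(T^n)$. Suppose that: (1) there are a set $Y_0\subset D(T^\infty)$, dense in $X$, and a mapping $S:Y_0\to Y_0$ such that (a) $TSy=y$ for all $y\in Y_0$; (b) $\sum_{n=1}^\infty S^ny$ converges unconditionally for all $y\in Y_0$; (c) $\sum_{n=1}^\infty T^ny$ converges unconditionally for all $y\in Y_0$; (2) there is a bounded operator $C\in B(X)$ such that (a) $\operatorname{Im}(C)\subset D(T^\infty)$ and $T^nC\in B(X)$ for all $n\in\mathbb{N}$; (b) $CTx=TCx$ for all $x\in D(T^\infty)$; (c) $\operatorname{Im}(C)$ is dense in $X$. Then $T$ is frequently hypercyclic.
   Context: $D(T^n)=\{x: x,Tx,\dots,T^{n-1}x\in D(T)\}$. A series $\sum_k x_k$ converges unconditionally if for every $\varepsilon>0$ there is $N$ with $\|\sum_{k\in F}x_k\|<\varepsilon$ for every finite $F\subset\mathbb{N}$ disjoint from $\{1,\dots,N\}$. $T$ is frequently hypercyclic if there is $f\in D(T)$ with $T^nf\in D(T)$ for all $n\ge1$ such that for every non-empty open $U\subset X$ the set $\{n\in\mathbb{N}: T^nf\in U\}$ has positive lower density, where the lower density of $E\subset\mathbb{N}$ is $\liminf_{N\to\infty}\#(E\cap\{1,\dots,N\})/N$. *)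

theory Defs
  imports "HOL-Analysis.Analysis"
begin

definition lin_op :: "'a::real_normed_vector set \<Rightarrow> ('a \<Rightarrow> 'a) \<Rightarrow> bool" where
  "lin_op D T \<longleftrightarrow> subspace D \<and>
     (\<forall>x\<in>D. \<forall>y\<in>D. T (x + y) = T x + T y) \<and> (\<forall>x\<in>D. \<forall>c. T (c *\<^sub>R x) = c *\<^sub>R T x)"

definition dom_pow :: "'a set \<Rightarrow> ('a \<Rightarrow> 'a) \<Rightarrow> nat \<Rightarrow> 'a set" where
  "dom_pow D T n = {x. \<forall>k<n. (T ^^ k) x \<in> D}"

definition dom_inf :: "'a set \<Rightarrow> ('a \<Rightarrow> 'a) \<Rightarrow> 'a set" where
  "dom_inf D T = (\<Inter>n. dom_pow D T n)"

definition separable_space :: "'a::metric_space itself \<Rightarrow> bool" where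
  "separable_space _ \<longleftrightarrow> (\<exists>A::'a set. countable A \<and> closure A = UNIV)"

text \<open>Unconditional convergence of the series sum_{k>=1} x_k (index 0 is never used).\<close>
definition uncond_conv :: "(nat \<Rightarrow> 'a::real_normed_vector) \<Rightarrow> bool" where
  "uncond_conv x \<longleftrightarrow> (\<forall>\<epsilon>>0. \<exists>N. \<forall>F. finite F \<and> F \<inter> {..N} = {} \<longrightarrow> norm (sum x F) < \<epsilon>)"

definition lower_density :: "nat set \<Rightarrow> ereal" where
  "lower_density E = liminf (\<lambda>N. ereal (real (card (E \<inter> {1..N})) / real N))"

definition freq_hypercyclic :: "'a::real_normed_vector set \<Rightarrow> ('a \<Rightarrow> 'a) \<Rightarrow> bool" where
  "freq_hypercyclic D T \<longleftrightarrow> (\<exists>f. f \<in> D \<and> (\<forall>n\<ge>1. (T ^^ n) f \<in> D) \<and>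
     (\<forall>U. open U \<and> U \<noteq> {} \<longrightarrow> lower_density {n. n \<ge> 1 \<and> (T ^^ n) f \<in> U} > 0))"

end

theory Submission
  imports Defs
begin


lemma le_pow2_mult: "(x::nat) \<le> 2^m * x"
proof -
  have "1 \<le> (2::nat)^m" by simp
  then show ?thesis using mult_le_mono1[of 1 "2^m" x] by simp
qed

fun QQ :: "(nat \<Rightarrow> nat) \<Rightarrow> nat \<Rightarrow> nat" where
  "QQ N 0 = N 0 + 1"
| "QQ N (Suc l) = 2^(l+8) * (N (Suc l) + 1 + QQ N l)"

lemma QQ_ge: "N l + 1 \<le> QQ N l"
proof (cases l)
  case 0 then show ?thesis by simp
next
  case (Suc j)
  have "N l + 1 \<le> N l + 1 + QQ N j" by simp
  also have "\<dots> \<le> 2^(j+8) * (N l + 1 + QQ N j)" by (rule le_pow2_mult)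
  finally show ?thesis using Suc by simp
qed

lemma QQ_step: "QQ N l + 1 \<le> QQ N (Suc l)"
proof -
  have "QQ N l + 1 \<le> N (Suc l) + 1 + QQ N l" by simp
  also have "\<dots> \<le> 2^(l+8) * (N (Suc l) + 1 + QQ N l)" by (rule le_pow2_mult)
  finally show ?thesis by simp
qed

lemma QQ_mono: "k \<le> l \<Longrightarrow> QQ N k \<le> QQ N l"
proof (rule lift_Suc_mono_le[of "QQ N"])
  fix n show "QQ N n \<le> QQ N (Suc n)" using QQ_step[of N n] by linarith
qed

lemma QQ_idx: "l < QQ N l"
proof (induction l)
  case 0 then show ?case by simp
next
  case (Suc l) then show ?case using QQ_step[of N l] by simp
qed

lemma QQ_big:
  assumes "k < l"
  shows "5 * 2^l * (2*(N l + 1) + 8 * QQ N k) \<le> QQ N l"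
proof -
  obtain j where l: "l = Suc j" and kj: "k \<le> j" using assms by (cases l) auto
  have "QQ N k \<le> QQ N j" using QQ_mono kj by blast
  then have "5 * 2^l * (2*(N l + 1) + 8 * QQ N k) \<le> 5 * 2^l * (2*(N l + 1) + 8 * QQ N j)"
    by simp
  also have "\<dots> = 2^j * (20 * (N l + 1) + 80 * QQ N j)" using l by (simp add: algebra_simps)
  also have "\<dots> \<le> 2^j * (256 * (N l + 1 + QQ N j))"
    by (intro mult_le_mono2) simp
  also have "\<dots> = QQ N l" using l by (simp add: power_add algebra_simps)
  finally show ?thesis .
qed

lemma card_ap_le:
  assumes p: "0 < (p::nat)"
  shows "card {n \<in> {a..<a+L}. n mod p = r} \<le> L div p + 2"
proof -
  let ?S = "{n \<in> {a..<a+L}. n mod p = r}"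
  have inj: "inj_on (\<lambda>n. n div p) ?S"
  proof (rule inj_onI)
    fix x y assume "x \<in> ?S" "y \<in> ?S" "x div p = y div p"
    then show "x = y" by (metis (mono_tags, lifting) div_mult_mod_eq mem_Collect_eq)
  qed
  have sub: "(\<lambda>n. n div p) ` ?S \<subseteq> {a div p .. a div p + L div p + 1}"
  proof
    fix m assume "m \<in> (\<lambda>n. n div p) ` ?S"
    then obtain n where n: "n \<in> ?S" "m = n div p" by blast
    have "a div p \<le> n div p" using n by (simp add: div_le_mono)
    moreover have "n div p \<le> (a + L) div p" using n by (simp add: div_le_mono)
    moreover have "(a + L) div p \<le> a div p + L div p + 1"
      proof -
      have "a mod p < p" "L mod p < p" using p by simp_all
      then have "a mod p + L mod p < 2*p" by linarith
      then have "(a mod p + L mod p) div p < 2" by (simp add: less_mult_imp_div_less)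
      moreover have "(a + L) div p = a div p + L div p + (a mod p + L mod p) div p" by (rule div_add1_eq)
      ultimately show ?thesis by linarith
    qed
    ultimately show "m \<in> {a div p .. a div p + L div p + 1}" using n by auto
  qed
  have "card ?S = card ((\<lambda>n. n div p) ` ?S)" using card_image[OF inj] by simp
  also have "\<dots> \<le> card {a div p .. a div p + L div p + 1}"
    by (rule card_mono[OF _ sub]) simp
  also have "\<dots> = L div p + 2" by simp
  finally show ?thesis .
qed

lemma same_res_sep:
  assumes "n mod p = m mod p" "n \<noteq> (m::nat)"
  shows "int p \<le> \<bar>int n - int m\<bar>"
proof -
  have "int n mod int p = int m mod int p" using assms(1) by (metis zmod_int)
  then have d: "int p dvd int n - int m" by (simp add: mod_eq_dvd_iff)
  have nz: "int n - int m \<noteq> 0" using assms(2) by simp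
  show ?thesis using dvd_imp_le_int[OF nz d] by simp
qed

lemma window_sep:
  assumes Q: "0 < D" "D \<le> Q" and m: "m mod (4*Q) = 2*Q"
    and n: "int D \<le> \<bar>int (n mod (4*Q)) - int (2*Q)\<bar>"
  shows "int D \<le> \<bar>int n - int m\<bar>"
proof (rule ccontr)
  assume c: "\<not> int D \<le> \<bar>int n - int m\<bar>"
  define d where "d = int n - int m"
  have m_eq: "int m = int (2*Q) + int (m div (4*Q)) * int (4*Q)"
    using m by (metis add.commute div_mult_mod_eq of_nat_add of_nat_mult)
  have n_eq: "int n = (int (2*Q) + d) + int (m div (4*Q)) * int (4*Q)"
    using m_eq d_def by simp
  have b: "0 \<le> int (2*Q) + d" "int (2*Q) + d < int (4*Q)" using c Q d_def by auto
  have "int (n mod (4*Q)) = int n mod int (4*Q)" by (rule zmod_int)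
  also have "\<dots> = (int (2*Q) + d) mod int (4*Q)" using n_eq by (metis mod_mult_self1)
  also have "\<dots> = int (2*Q) + d" using b by (rule mod_pos_pos_trivial)
  finally have "int (n mod (4*Q)) - int (2*Q) = d" by simp
  then show False using n c d_def by simp
qed

lemma geom_fin_le: "finite F \<Longrightarrow> (\<Sum>l\<in>F. (1/2::real)^l) \<le> 2"
proof -
  assume F: "finite F"
  have "summable (\<lambda>l. (1/2::real)^l)" by (rule summable_geometric) simp
  then have "(\<Sum>l\<in>F. (1/2::real)^l) \<le> (\<Sum>l. (1/2::real)^l)"
    by (rule sum_le_suminf[OF _ F]) simp
  also have "\<dots> = 2" using suminf_geometric[of "1/2::real"] by simp
  finally show ?thesis .
qed

lemma real_div_ge: "0 < (p::nat) \<Longrightarrow> real N / real p - 1 \<le> real (N div p)"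
proof -
  assume p: "0 < p"
  have "N < (N div p + 1) * p" using p
    by (metis add.commute div_mult_mod_eq mod_less_divisor add_less_cancel_left distrib_right mult_1)
  then have "real N < (real (N div p) + 1) * real p" by (metis of_nat_1 of_nat_add of_nat_less_iff of_nat_mult)
  then show ?thesis using p by (simp add: field_simps)
qed

lemma comb:
  fixes NN :: "nat \<Rightarrow> nat" assumes mono: "mono NN"
  shows "\<exists>A::nat \<Rightarrow> nat set. (\<forall>k l. k \<noteq> l \<longrightarrow> A k \<inter> A l = {}) \<and> (\<forall>k. \<forall>n\<in>A k. NN k < n) \<and>
     (\<forall>k l. \<forall>n\<in>A k. \<forall>m\<in>A l. n \<noteq> m \<longrightarrow> int (NN k) < \<bar>int n - int m\<bar> \<and> int (NN l) < \<bar>int n - int m\<bar>) \<and>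
     (\<forall>k. \<exists>c>0. eventually (\<lambda>N. c \<le> real (card (A k \<inter> {1..N})) / real N) sequentially)"
proof -
  define Q where "Q = QQ NN"
  define P where "P k = 4 * Q k" for k
  define h where "h k = 2 * Q k" for k
  define D where "D l = NN l + 1" for l
  define A where "A k = {n. n mod P k = h k \<and> (\<forall>l>k. int (D l) \<le> \<bar>int (n mod P l) - int (h l)\<bar>)}" for k
  have DQ: "D k \<le> Q k" for k using QQ_ge[of NN k] unfolding D_def Q_def by simp
  have Dpos: "0 < D k" for k unfolding D_def by simp
  have Qpos: "0 < Q k" for k using DQ[of k] Dpos[of k] by linarith
  have Ppos: "0 < P k" for k using Qpos[of k] unfolding P_def by simp
  have hlt: "h k < P k" for k using Qpos[of k] unfolding P_def h_def by simp
  have disj: "A k \<inter> A l = {}" if "k < l" for k l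
  proof (rule ccontr)
    assume "A k \<inter> A l \<noteq> {}"
    then obtain n where "n \<in> A k" "n \<in> A l" by blast
    then have "n mod P l = h l" "int (D l) \<le> \<bar>int (n mod P l) - int (h l)\<bar>"
      using that unfolding A_def by auto
    then show False using Dpos[of l] by simp
  qed
  have sep_lt: "int (D l) \<le> \<bar>int n - int m\<bar>" if "k < l" "n \<in> A k" "m \<in> A l" for k l n m
  proof -
    have "m mod (4 * Q l) = 2 * Q l" using that(3) unfolding A_def P_def h_def by simp
    moreover have "int (D l) \<le> \<bar>int (n mod (4 * Q l)) - int (2 * Q l)\<bar>"
      using that(1,2) unfolding A_def P_def h_def by simp
    ultimately show ?thesis by (rule window_sep[OF Dpos[of l] DQ[of l]])
  qed
  have minA: "NN k < n" if "n \<in> A k" for k n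
  proof -
    have "n mod P k = h k" using that unfolding A_def by simp
    then have "h k \<le> n" by (metis mod_less_eq_dividend)
    then show ?thesis using DQ[of k] unfolding h_def D_def by simp
  qed
  have sep: "int (NN k) < \<bar>int n - int m\<bar> \<and> int (NN l) < \<bar>int n - int m\<bar>"
    if "n \<in> A k" "m \<in> A l" "n \<noteq> m" for k l n m
  proof (cases k l rule: linorder_cases)
    case less
    have "int (D l) \<le> \<bar>int n - int m\<bar>" using sep_lt[OF less that(1,2)] .
    moreover have "NN k \<le> NN l" using mono less by (simp add: monoD)
    ultimately show ?thesis unfolding D_def by simp
  next
    case equal
    have "n mod P k = m mod P k" using that(1,2) equal unfolding A_def by simp
    then have "int (P k) \<le> \<bar>int n - int m\<bar>" using same_res_sep that(3) by blast
    moreover have "NN k < P k" using DQ[of k] unfolding P_def D_def by simp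
    ultimately show ?thesis using equal by simp
  next
    case greater
    have "int (D k) \<le> \<bar>int m - int n\<bar>" using sep_lt[OF greater that(2,1)] .
    moreover have "NN l \<le> NN k" using mono greater by (simp add: monoD)
    moreover have "\<bar>int m - int n\<bar> = \<bar>int n - int m\<bar>" by simp
    ultimately show ?thesis unfolding D_def by linarith
  qed
  have win_big: "Q l < n mod P l"
    if "\<bar>int (n mod P l) - int (h l)\<bar> < int (D l)" for n l
    using that DQ[of l] unfolding h_def by simp
  have dens: "\<exists>c>0. eventually (\<lambda>N. c \<le> real (card (A k \<inter> {1..N})) / real N) sequentially" for k
  proof -
    have key: "real N / (2 * real (P k)) - 1 \<le> real (card (A k \<inter> {1..N}))" for N
    proof -
      define AP where "AP = {n\<in>{1..N}. n mod P k = h k}"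
      define Bad where "Bad l = {n\<in>{1..N}. n mod P k = h k \<and> \<bar>int (n mod P l) - int (h l)\<bar> < int (D l)}" for l
      have finB: "finite (\<Union>l\<in>{k<..<N}. Bad l)" unfolding Bad_def by auto
      have sub: "AP - (\<Union>l\<in>{k<..<N}. Bad l) \<subseteq> A k \<inter> {1..N}"
      proof
        fix n assume n: "n \<in> AP - (\<Union>l\<in>{k<..<N}. Bad l)"
        have nN: "n \<in> {1..N}" "n mod P k = h k" using n unfolding AP_def by auto
        have "int (D l) \<le> \<bar>int (n mod P l) - int (h l)\<bar>" if "k < l" for l
        proof (rule ccontr)
          assume c: "\<not> ?thesis"
          then have "Q l < n mod P l" using win_big by simp
          moreover have "n mod P l \<le> n" by simp
          moreover have "l < Q l" using QQ_idx unfolding Q_def by simp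
          moreover have "n \<le> N" using nN(1) by simp
          ultimately have "l < N" by linarith
          then have "n \<in> Bad l" "l \<in> {k<..<N}" using c nN that unfolding Bad_def by auto
          then show False using n by blast
        qed
        then show "n \<in> A k \<inter> {1..N}" using nN unfolding A_def by simp
      qed
      have cardAP: "N div P k \<le> card AP"
      proof -
        have "inj_on (\<lambda>q. q * P k + h k) {..<N div P k}" by (rule inj_onI) (use Ppos[of k] in simp)
        moreover have "(\<lambda>q. q * P k + h k) ` {..<N div P k} \<subseteq> AP"
        proof
          fix x assume "x \<in> (\<lambda>q. q * P k + h k) ` {..<N div P k}"
          then obtain q where q: "q < N div P k" "x = q * P k + h k" by blast
          have "Suc q * P k \<le> N div P k * P k" using q(1) by (meson Suc_leI mult_le_mono1)
          also have "\<dots> \<le> N" by simp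
          finally have "x \<le> N" using q(2) hlt[of k] by simp
          moreover have "1 \<le> x" using q(2) Qpos[of k] unfolding h_def by simp
          moreover have "x mod P k = h k" using q(2) hlt[of k] by simp
          ultimately show "x \<in> AP" unfolding AP_def by simp
        qed
        ultimately show ?thesis using card_inj_on_le[of _ _ AP] unfolding AP_def by fastforce
      qed
      have cardBad: "real (card (Bad l)) \<le> real N / real (P k) * (1/2)^(l+2)" if kl: "k < l" for l
      proof (cases "Bad l = {}")
        case True then show ?thesis by simp
      next
        case False
        then obtain n0 where n0: "n0 \<in> Bad l" by blast
        have "Q l < n0 mod P l" using n0 win_big unfolding Bad_def by simp
        moreover have "n0 mod P l \<le> n0" by simp
        moreover have "n0 \<le> N" using n0 unfolding Bad_def by simp
        ultimately have QN: "Q l < N" by linarith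
        define W where "W q = {n \<in> {q * P l + h l - D l ..< q * P l + h l - D l + 2 * D l}. n mod P k = h k}" for q
        have "Bad l \<subseteq> (\<Union>q\<in>{..N div P l}. W q)"
        proof
          fix n assume n: "n \<in> Bad l"
          define q where "q = n div P l"
          have nq: "n = q * P l + n mod P l" unfolding q_def by simp
          have "q \<le> N div P l" unfolding q_def using n unfolding Bad_def by (simp add: div_le_mono)
          moreover have ab: "\<bar>int (n mod P l) - int (h l)\<bar> < int (D l)" using n unfolding Bad_def by simp
          moreover have Dh: "D l \<le> h l" using DQ[of l] unfolding h_def by simp
          moreover have "n mod P k = h k" using n unfolding Bad_def by simp
          ultimately have r: "h l - D l \<le> n mod P l" "n mod P l < h l - D l + 2 * D l" "q \<in> {..N div P l}"
            "n mod P k = h k" by auto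
          have "q * P l + h l - D l \<le> n" using r(1) nq Dh by linarith
          moreover have "n < q * P l + h l - D l + 2 * D l" using r(2) nq Dh by linarith
          ultimately have "n \<in> W q" unfolding W_def using r(4) by simp
          then show "n \<in> (\<Union>q\<in>{..N div P l}. W q)" using r(3) by blast
        qed
        then have "card (Bad l) \<le> card (\<Union>q\<in>{..N div P l}. W q)"
          by (rule card_mono[rotated]) (simp add: W_def)
        also have "\<dots> \<le> (\<Sum>q\<in>{..N div P l}. card (W q))" by (rule card_UN_le) simp
        also have "\<dots> \<le> (\<Sum>q\<in>{..N div P l}. 2 * D l div P k + 2)"
          by (rule sum_mono) (unfold W_def, rule card_ap_le[OF Ppos])
        also have "\<dots> = (N div P l + 1) * (2 * D l div P k + 2)" by simp
        finally have "real (card (Bad l)) \<le> real ((N div P l + 1) * (2 * D l div P k + 2))"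
          by (rule of_nat_mono)
        then have c1: "real (card (Bad l)) \<le> (real (N div P l) + 1) * (real (2 * D l div P k) + 2)"
          by (simp add: algebra_simps)
        have pl: "0 < real (P l)" "0 < real (P k)" using Ppos by simp_all
        have a1: "real (N div P l) \<le> real N / real (P l)" by (rule of_nat_div_le_of_nat)
        have a2: "1 \<le> 4 * real N / real (P l)" using QN pl unfolding P_def by (simp add: field_simps)
        have a3: "real (2 * D l div P k) \<le> 2 * real (D l) / real (P k)" using of_nat_div_le_of_nat[of "2 * D l" "P k"] by simp
        have "real (card (Bad l)) \<le> (5 * real N / real (P l)) * (2 * real (D l) / real (P k) + 2)"
        proof -
          have "(real (N div P l) + 1) \<le> 5 * real N / real (P l)" using a1 a2 by simp
          moreover have "real (2 * D l div P k) + 2 \<le> 2 * real (D l) / real (P k) + 2" using a3 by simp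
          ultimately have "(real (N div P l) + 1) * (real (2 * D l div P k) + 2) \<le> (5 * real N / real (P l)) * (2 * real (D l) / real (P k) + 2)"
            by (intro mult_mono) simp_all
          then show ?thesis using c1 by linarith
        qed
        also have "\<dots> = real N / real (P k) * ((5 * (2 * real (D l) + 2 * real (P k))) / real (P l))"
          using pl by (simp add: field_simps)
        also have "\<dots> \<le> real N / real (P k) * (1/2)^(l+2)"
        proof (rule mult_left_mono)
          have "5 * 2^l * (2*(NN l + 1) + 8 * QQ NN k) \<le> QQ NN l" by (rule QQ_big[OF kl])
          then have "real (5 * 2^l * (2*(NN l + 1) + 8 * QQ NN k)) \<le> real (QQ NN l)" by linarith
          then have "5 * 2^l * (2 * real (D l) + 2 * real (P k)) \<le> real (Q l)"
            unfolding D_def P_def Q_def by (simp add: algebra_simps)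
          then have "5 * (2 * real (D l) + 2 * real (P k)) * 2^(l+2) \<le> real (P l)"
            unfolding P_def by (simp add: power_add algebra_simps)
          then have "5 * (2 * real (D l) + 2 * real (P k)) \<le> real (P l) / 2^(l+2)"
            by (simp add: pos_le_divide_eq)
          then have "(5 * (2 * real (D l) + 2 * real (P k))) / real (P l) \<le> 1 / 2^(l+2)"
            using pl(1) by (simp add: pos_divide_le_eq)
          then show "(5 * (2 * real (D l) + 2 * real (P k))) / real (P l) \<le> (1/2)^(l+2)"
            by (simp add: power_one_over)
        qed simp
        finally show ?thesis .
      qed
      have "card AP - card (\<Union>l\<in>{k<..<N}. Bad l) \<le> card (AP - (\<Union>l\<in>{k<..<N}. Bad l))"
        by (rule diff_card_le_card_Diff[OF finB])
      also have "\<dots> \<le> card (A k \<inter> {1..N})" by (rule card_mono[OF _ sub]) simp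
      finally have c2: "real (card AP) - real (card (\<Union>l\<in>{k<..<N}. Bad l)) \<le> real (card (A k \<inter> {1..N}))"
        by linarith
      have "card (\<Union>l\<in>{k<..<N}. Bad l) \<le> (\<Sum>l\<in>{k<..<N}. card (Bad l))" by (rule card_UN_le) simp
      then have "real (card (\<Union>l\<in>{k<..<N}. Bad l)) \<le> (\<Sum>l\<in>{k<..<N}. real (card (Bad l)))"
        by (metis of_nat_le_iff of_nat_sum)
      also have "\<dots> \<le> (\<Sum>l\<in>{k<..<N}. real N / real (P k) * (1/2)^(l+2))"
        by (rule sum_mono) (use cardBad in auto)
      also have "\<dots> = real N / real (P k) / 4 * (\<Sum>l\<in>{k<..<N}. (1/2)^l)"
        by (simp add: sum_distrib_left power_add)
      also have "\<dots> \<le> real N / real (P k) / 4 * 2"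
        by (rule mult_left_mono[OF geom_fin_le]) simp_all
      finally have c3: "real (card (\<Union>l\<in>{k<..<N}. Bad l)) \<le> real N / real (P k) / 2" by simp
      have c4: "real N / real (P k) - 1 \<le> real (card AP)"
        using real_div_ge[OF Ppos, of N k] cardAP by linarith
      show ?thesis using c2 c3 c4 by (simp add: field_simps)
    qed
    define c where "c = 1 / (4 * real (P k))"
    have cpos: "c > 0" unfolding c_def using Ppos[of k] by simp
    have "eventually (\<lambda>N. c \<le> real (card (A k \<inter> {1..N})) / real N) sequentially"
      unfolding eventually_sequentially
    proof (intro exI[of _ "4 * P k"] allI impI)
      fix N assume N: "4 * P k \<le> N"
      have pk: "0 < real (P k)" using Ppos by simp
      have Npos: "0 < real N" using N Ppos[of k] by simp
      have "real N / (2 * real (P k)) - 1 \<le> real (card (A k \<inter> {1..N}))" by (rule key)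
      moreover have "1 \<le> real N / (4 * real (P k))" using N pk by (simp add: field_simps)
      ultimately have "real N / (4 * real (P k)) \<le> real (card (A k \<inter> {1..N}))"
        by (simp add: field_simps)
      then show "c \<le> real (card (A k \<inter> {1..N})) / real N"
        unfolding c_def using Npos pk by (simp add: field_simps)
    qed
    then show ?thesis using cpos by blast
  qed
  have d2: "A k \<inter> A l = {}" if "k \<noteq> l" for k l
  proof (cases "k < l")
    case True then show ?thesis using disj by blast
  next
    case False then have "l < k" using that by simp
    then show ?thesis using disj[of l k] by blast
  qed
  show ?thesis
    apply (rule exI[of _ A])
    apply (intro conjI allI impI ballI)
    subgoal using d2 by blast
    subgoal using minA by blast
    subgoal using sep by blast
    subgoal using sep by blast
    subgoal using dens by blast
    done
qed



definition uu :: "('a \<Rightarrow> 'a) \<Rightarrow> ('a \<Rightarrow> 'a) \<Rightarrow> 'a \<Rightarrow> int \<Rightarrow> 'a" where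
  "uu S T y j = (if 0 \<le> j then (S ^^ nat j) y else (T ^^ nat (- j)) y)"

definition tl_ok :: "('a::real_normed_vector \<Rightarrow> 'a) \<Rightarrow> ('a \<Rightarrow> 'a) \<Rightarrow> 'a \<Rightarrow> nat \<Rightarrow> real \<Rightarrow> bool" where
  "tl_ok S T y N e \<longleftrightarrow> (\<forall>F. finite F \<longrightarrow> (\<forall>j\<in>F. int N < \<bar>j\<bar>) \<longrightarrow> norm (\<Sum>j\<in>F. uu S T y j) \<le> e)"

lemma tl_mono: "tl_ok S T y N e \<Longrightarrow> N \<le> N' \<Longrightarrow> e \<le> e' \<Longrightarrow> tl_ok S T y N' e'"
  unfolding tl_ok_def by force

lemma tl_exists:
  fixes S T :: "'a::real_normed_vector \<Rightarrow> 'a"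
  assumes hS: "uncond_conv (\<lambda>n. (S ^^ n) y)" and hT: "uncond_conv (\<lambda>n. (T ^^ n) y)" and e: "0 < e"
  shows "\<exists>N. tl_ok S T y N e"
proof -
  obtain N1 where N1: "\<And>F. finite F \<and> F \<inter> {..N1} = {} \<Longrightarrow> norm (\<Sum>n\<in>F. (S ^^ n) y) < e/2"
    using hS e unfolding uncond_conv_def by (meson half_gt_zero)
  obtain N2 where N2: "\<And>F. finite F \<and> F \<inter> {..N2} = {} \<Longrightarrow> norm (\<Sum>n\<in>F. (T ^^ n) y) < e/2"
    using hT e unfolding uncond_conv_def by (meson half_gt_zero)
  have "tl_ok S T y (max N1 N2) e" unfolding tl_ok_def
  proof (intro allI impI)
    fix F :: "int set" assume F: "finite F" "\<forall>j\<in>F. int (max N1 N2) < \<bar>j\<bar>"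
    define Fp where "Fp = F \<inter> {j. 0 \<le> j}"
    define Fn where "Fn = F - {j. 0 \<le> j}"
    have split: "(\<Sum>j\<in>F. uu S T y j) = (\<Sum>j\<in>Fp. uu S T y j) + (\<Sum>j\<in>Fn. uu S T y j)"
      unfolding Fp_def Fn_def by (rule sum.Int_Diff[OF F(1)])
    have injp: "inj_on nat Fp" unfolding Fp_def by (rule inj_onI) auto
    have "(\<Sum>j\<in>Fp. uu S T y j) = (\<Sum>j\<in>Fp. (S ^^ nat j) y)"
      unfolding Fp_def uu_def by (rule sum.cong) auto
    also have "\<dots> = (\<Sum>n\<in>nat ` Fp. (S ^^ n) y)" by (rule sum.reindex[OF injp, symmetric, unfolded comp_def])
    finally have ep: "(\<Sum>j\<in>Fp. uu S T y j) = (\<Sum>n\<in>nat ` Fp. (S ^^ n) y)" .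
    have "nat ` Fp \<inter> {..N1} = {}"
    proof (rule ccontr)
      assume "nat ` Fp \<inter> {..N1} \<noteq> {}"
      then obtain j where "j \<in> Fp" "nat j \<le> N1" by auto
      moreover have "int (max N1 N2) < \<bar>j\<bar>" "0 \<le> j" using F(2) \<open>j \<in> Fp\<close> unfolding Fp_def by auto
      ultimately show False by linarith
    qed
    then have np: "norm (\<Sum>j\<in>Fp. uu S T y j) < e/2" using N1[of "nat ` Fp"] F(1) ep unfolding Fp_def by simp
    have injn: "inj_on (\<lambda>j. nat (- j)) Fn" unfolding Fn_def by (rule inj_onI) auto
    have "(\<Sum>j\<in>Fn. uu S T y j) = (\<Sum>j\<in>Fn. (T ^^ nat (- j)) y)"
      unfolding Fn_def uu_def by (rule sum.cong) auto
    also have "\<dots> = (\<Sum>n\<in>(\<lambda>j. nat (- j)) ` Fn. (T ^^ n) y)" by (rule sum.reindex[OF injn, symmetric, unfolded comp_def])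
    finally have en: "(\<Sum>j\<in>Fn. uu S T y j) = (\<Sum>n\<in>(\<lambda>j. nat (- j)) ` Fn. (T ^^ n) y)" .
    have "(\<lambda>j. nat (- j)) ` Fn \<inter> {..N2} = {}"
    proof (rule ccontr)
      assume "(\<lambda>j. nat (- j)) ` Fn \<inter> {..N2} \<noteq> {}"
      then obtain j where "j \<in> Fn" "nat (- j) \<le> N2" by auto
      moreover have "int (max N1 N2) < \<bar>j\<bar>" "j < 0" using F(2) \<open>j \<in> Fn\<close> unfolding Fn_def by auto
      ultimately show False by linarith
    qed
    then have nn: "norm (\<Sum>j\<in>Fn. uu S T y j) < e/2" using N2[of "(\<lambda>j. nat (- j)) ` Fn"] F(1) en unfolding Fn_def by simp
    have "norm (\<Sum>j\<in>F. uu S T y j) \<le> norm (\<Sum>j\<in>Fp. uu S T y j) + norm (\<Sum>j\<in>Fn. uu S T y j)"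
      unfolding split by (rule norm_triangle_ineq)
    then show "norm (\<Sum>j\<in>F. uu S T y j) \<le> e" using np nn by linarith
  qed
  then show ?thesis by blast
qed

lemma dom_inf_iff: "x \<in> dom_inf D T \<longleftrightarrow> (\<forall>k. (T ^^ k) x \<in> D)"
  unfolding dom_inf_def dom_pow_def by blast

lemma dom_inf_pow: "x \<in> dom_inf D T \<Longrightarrow> (T ^^ n) x \<in> dom_inf D T"
  unfolding dom_inf_iff by (metis comp_apply funpow_add)

lemma ld_pos:
  assumes "A \<subseteq> E" and "c > 0" and ev: "eventually (\<lambda>N. c \<le> real (card (A \<inter> {1..N})) / real N) sequentially"
  shows "lower_density E > 0"
proof -
  have "eventually (\<lambda>N. ereal c \<le> ereal (real (card (E \<inter> {1..N})) / real N)) sequentially"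
    using ev
  proof (rule eventually_mono)
    fix N assume "c \<le> real (card (A \<inter> {1..N})) / real N"
    moreover have "card (A \<inter> {1..N}) \<le> card (E \<inter> {1..N})" using assms(1) by (intro card_mono) auto
    ultimately show "ereal c \<le> ereal (real (card (E \<inter> {1..N})) / real N)"
      by (simp add: divide_right_mono order_trans)
  qed
  then have "ereal c \<le> lower_density E" unfolding lower_density_def by (rule Liminf_bounded)
  then show ?thesis using assms(2) by (metis ereal_less(2) less_le_trans zero_ereal_def)
qed

theorem theorem3p2:
  fixes D :: "'a::banach set" and T :: "'a \<Rightarrow> 'a"
    and Y0 :: "'a set" and S :: "'a \<Rightarrow> 'a" and C :: "'a \<Rightarrow> 'a"
  assumes sep: "separable_space TYPE('a)"
    and lin: "lin_op D T"
    and Y0_sub: "Y0 \<subseteq> dom_inf D T"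
    and Y0_dense: "closure Y0 = UNIV"
    and S_maps: "S ` Y0 \<subseteq> Y0"
    and TS: "\<And>y. y \<in> Y0 \<Longrightarrow> T (S y) = y"
    and S_sum: "\<And>y. y \<in> Y0 \<Longrightarrow> uncond_conv (\<lambda>n. (S ^^ n) y)"
    and T_sum: "\<And>y. y \<in> Y0 \<Longrightarrow> uncond_conv (\<lambda>n. (T ^^ n) y)"
    and C_bdd: "bounded_linear C"
    and C_range: "range C \<subseteq> dom_inf D T"
    and TnC_bdd: "\<And>n. n \<ge> 1 \<Longrightarrow> bounded_linear (\<lambda>x. (T ^^ n) (C x))"
    and CT: "\<And>x. x \<in> dom_inf D T \<Longrightarrow> C (T x) = T (C x)"
    and C_dense: "closure (range C) = UNIV"
  shows "freq_hypercyclic D T"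
proof -
  have comm: "(T ^^ n) (C x) = C ((T ^^ n) x)" if "x \<in> dom_inf D T" for n x
  proof (induction n)
    case 0 then show ?case by simp
  next
    case (Suc n)
    have "(T ^^ Suc n) (C x) = T ((T ^^ n) (C x))" by simp
    also have "\<dots> = T (C ((T ^^ n) x))" using Suc by simp
    also have "\<dots> = C (T ((T ^^ n) x))" using CT[OF dom_inf_pow[OF that, of n]] by simp
    finally show ?case by simp
  qed
  have SY: "(S ^^ n) y \<in> Y0" if "y \<in> Y0" for n y
    using that by (induction n) (use S_maps in auto)
  have TSn: "(T ^^ n) ((S ^^ n) y) = y" if "y \<in> Y0" for n y
    using that
  proof (induction n arbitrary: y)
    case 0 then show ?case by simp
  next
    case (Suc n)
    have e1: "(S ^^ Suc n) y = S ((S ^^ n) y)" by simp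
    have e2: "(T ^^ Suc n) x = (T ^^ n) (T x)" for x by (simp add: funpow_Suc_right del: funpow.simps)
    have "(T ^^ Suc n) ((S ^^ Suc n) y) = (T ^^ n) (T (S ((S ^^ n) y)))"
      unfolding e1 e2 ..
    also have "\<dots> = (T ^^ n) ((S ^^ n) y)" using TS[OF SY[OF Suc.prems]] by simp
    also have "\<dots> = y" using Suc by simp
    finally show ?case .
  qed
  have TSm: "(T ^^ n) ((S ^^ m) y) = uu S T y (int m - int n)" if "y \<in> Y0" for n m y
  proof (cases "n \<le> m")
    case True
    have "(S ^^ m) y = (S ^^ n) ((S ^^ (m - n)) y)" using True by (metis funpow_add le_add_diff_inverse comp_apply)
    then have "(T ^^ n) ((S ^^ m) y) = (S ^^ (m - n)) y" using TSn[OF SY[OF that]] by simp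
    moreover have "uu S T y (int m - int n) = (S ^^ (m - n)) y" unfolding uu_def using True
      by (simp add: nat_diff_distrib')
    ultimately show ?thesis by simp
  next
    case False
    have "(T ^^ n) ((S ^^ m) y) = (T ^^ (n - m)) ((T ^^ m) ((S ^^ m) y))"
      using False by (metis funpow_add le_add_diff_inverse2 comp_apply nat_le_linear)
    also have "\<dots> = (T ^^ (n - m)) y" using TSn[OF that] by simp
    finally show ?thesis unfolding uu_def using False by (simp add: nat_diff_distrib')
  qed
  have Rz: "(T ^^ n) (C ((S ^^ m) y)) = C (uu S T y (int m - int n))" if "y \<in> Y0" for n m y
    using comm[of "(S ^^ m) y" n] TSm[OF that] SY[OF that] Y0_sub by auto
  obtain Ad :: "'a set" where Ad: "countable Ad" "closure Ad = UNIV"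
    using sep unfolding separable_space_def by blast
  have Adne: "Ad \<noteq> {}" using Ad(2) by auto
  define ee where "ee = from_nat_into Ad"
  have ee_range: "range ee = Ad" unfolding ee_def using range_from_nat_into[OF Adne Ad(1)] .
  have yy_ex: "\<exists>y. y \<in> Y0 \<and> dist y (ee (fst (prod_decode l))) < 1 / (real (snd (prod_decode l)) + 1)" for l
  proof -
    have "ee (fst (prod_decode l)) \<in> closure Y0" using Y0_dense by simp
    then show ?thesis unfolding closure_approachable by (metis of_nat_0_le_iff zero_less_divide_1_iff add_pos_nonneg zero_less_one add.commute)
  qed
  define yy where "yy l = (SOME y. y \<in> Y0 \<and> dist y (ee (fst (prod_decode l))) < 1 / (real (snd (prod_decode l)) + 1))" for l
  have yy: "yy l \<in> Y0" "dist (yy l) (ee (fst (prod_decode l))) < 1 / (real (snd (prod_decode l)) + 1)" for l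
    using someI_ex[OF yy_ex[of l]] unfolding yy_def by auto
  obtain B where B: "B > 0" "\<And>x. norm (C x) \<le> norm x * B"
    using bounded_linear.pos_bounded[OF C_bdd] by blast
  have targets: "\<exists>k\<ge>K. dist (C (yy k)) x < r" if r: "r > 0" for x r K
  proof -
    have "x \<in> closure (range C)" using C_dense by simp
    then obtain w where w: "dist (C w) x < r/2" unfolding closure_approachable using r
      by (metis half_gt_zero rangeE)
    have "w \<in> closure Ad" using Ad(2) by simp
    then obtain a where a: "a \<in> Ad" "dist a w < r/(4*B)" unfolding closure_approachable using r B(1)
      by (metis divide_pos_pos mult_pos_pos zero_less_numeral)
    obtain i where i: "ee i = a" using a(1) ee_range by blast
    obtain j0 where j0: "1 / (real j0 + 1) < r/(4*B)"
      using r B(1) by (metis divide_pos_pos mult_pos_pos zero_less_numeral nat_approx_posE add.commute of_nat_Suc)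
    define j where "j = max j0 K"
    have "1 / (real j + 1) \<le> 1 / (real j0 + 1)" unfolding j_def by (simp add: frac_le)
    with j0 have jj: "1 / (real j + 1) < r/(4*B)" by linarith
    define k where "k = prod_encode (i, j)"
    have kK: "K \<le> k" unfolding k_def j_def by (metis le_prod_encode_2 max.bounded_iff)
    have "dist (yy k) a < r/(4*B)" using yy(2)[of k] jj i unfolding k_def by simp
    then have "dist (yy k) w < r/(2*B)" using a(2) dist_triangle[of "yy k" w a] by (simp add: field_simps)
    then have "norm (C (yy k) - C w) < r/2"
    proof -
      assume h: "dist (yy k) w < r/(2*B)"
      have "norm (C (yy k) - C w) = norm (C (yy k - w))" by (simp add: linear_diff[OF bounded_linear.linear[OF C_bdd]])
      also have "\<dots> \<le> norm (yy k - w) * B" by (rule B(2))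
      also have "\<dots> < r/(2*B) * B" using h B(1) by (intro mult_strict_right_mono) (simp_all add: dist_norm)
      also have "\<dots> = r/2" using B(1) by simp
      finally show ?thesis .
    qed
    then have "dist (C (yy k)) x < r" using w dist_triangle[of "C (yy k)" x "C w"] by (simp add: dist_norm)
    then show ?thesis using kK by blast
  qed
  have th_ex: "\<exists>N. tl_ok S T (yy l) N ((1/2)^(k+l))" for l k
    by (rule tl_exists[OF S_sum[OF yy(1)] T_sum[OF yy(1)]]) simp
  define th where "th l k = (SOME N. tl_ok S T (yy l) N ((1/2)^(k+l)))" for l k
  have th: "tl_ok S T (yy l) (th l k) ((1/2)^(k+l))" for l k
    unfolding th_def by (rule someI_ex[OF th_ex])
  define NN where "NN k = k + (\<Sum>k'\<le>k. \<Sum>l\<le>k'. th l k')" for k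
  have NN_mono: "mono NN"
  proof (rule monoI)
    fix a b :: nat assume ab: "a \<le> b"
    have "(\<Sum>k'\<le>a. \<Sum>l\<le>k'. th l k') \<le> (\<Sum>k'\<le>b. \<Sum>l\<le>k'. th l k')"
      by (rule sum_mono2) (use ab in auto)
    then show "NN a \<le> NN b" unfolding NN_def using ab by simp
  qed
  have NNtl: "tl_ok S T (yy l) (NN k) ((1/2)^(k+l))" if "l \<le> k" for l k
  proof -
    have "th l k \<le> (\<Sum>l\<le>k. th l k)" by (rule member_le_sum) (use that in auto)
    also have "\<dots> \<le> (\<Sum>k'\<le>k. \<Sum>l\<le>k'. th l k')"
      by (rule member_le_sum[where f="\<lambda>k'. \<Sum>l\<le>k'. th l k'"]) auto
    also have "\<dots> \<le> NN k" unfolding NN_def by simp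
    finally show ?thesis using tl_mono[OF th] by blast
  qed
  obtain A :: "nat \<Rightarrow> nat set" where Ap: "(\<forall>k l. k \<noteq> l \<longrightarrow> A k \<inter> A l = {}) \<and> (\<forall>k. \<forall>n\<in>A k. NN k < n) \<and>
     (\<forall>k l. \<forall>n\<in>A k. \<forall>m\<in>A l. n \<noteq> m \<longrightarrow> int (NN k) < \<bar>int n - int m\<bar> \<and> int (NN l) < \<bar>int n - int m\<bar>) \<and>
     (\<forall>k. \<exists>c>0. eventually (\<lambda>N. c \<le> real (card (A k \<inter> {1..N})) / real N) sequentially)"
    using comb[OF NN_mono] by blast
  have A_disj: "\<And>k l. k \<noteq> l \<Longrightarrow> A k \<inter> A l = {}" using Ap by blast
  have A_min: "\<And>k n. n \<in> A k \<Longrightarrow> NN k < n" using Ap by blast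
  have A_sep: "\<And>k l n m. n \<in> A k \<Longrightarrow> m \<in> A l \<Longrightarrow> n \<noteq> m \<Longrightarrow>
              int (NN k) < \<bar>int n - int m\<bar> \<and> int (NN l) < \<bar>int n - int m\<bar>" using Ap by blast
  have A_dens: "\<And>k. \<exists>c>0. eventually (\<lambda>N. c \<le> real (card (A k \<inter> {1..N})) / real N) sequentially"
    using Ap by blast
  define Aset where "Aset = (\<Union>k. A k)"
  define lab where "lab m = (THE k. m \<in> A k)" for m
  have lab: "lab m = k" if "m \<in> A k" for m k
    unfolding lab_def
  proof (rule the_equality)
    show "m \<in> A k" by (rule that)
  next
    fix k' assume "m \<in> A k'"
    then show "k' = k" using that A_disj[of k' k] by blast
  qed
  have labA: "m \<in> A (lab m)" if "m \<in> Aset" for m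
    using that lab unfolding Aset_def by auto
  have E: "norm (\<Sum>m\<in>F. uu S T (yy (lab m)) (int m - n)) \<le> 2 * (1/2)^k"
    if F: "finite F" "F \<subseteq> Aset"
      and Fc: "\<And>m. m \<in> F \<Longrightarrow> int (NN k) < \<bar>int m - n\<bar> \<and> int (NN (lab m)) < \<bar>int m - n\<bar>"
    for k F n
  proof -
    define Fl where "Fl l = {m \<in> F. lab m = l}" for l
    have "(\<Sum>m\<in>F. uu S T (yy (lab m)) (int m - n))
        = (\<Sum>l\<in>lab ` F. \<Sum>m\<in>Fl l. uu S T (yy (lab m)) (int m - n))"
      unfolding Fl_def by (rule sum.image_gen[OF F(1)])
    also have "\<dots> = (\<Sum>l\<in>lab ` F. \<Sum>m\<in>Fl l. uu S T (yy l) (int m - n))"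
      by (intro sum.cong refl) (simp add: Fl_def)
    finally have eq: "(\<Sum>m\<in>F. uu S T (yy (lab m)) (int m - n))
        = (\<Sum>l\<in>lab ` F. \<Sum>m\<in>Fl l. uu S T (yy l) (int m - n))" .
    have inner: "norm (\<Sum>m\<in>Fl l. uu S T (yy l) (int m - n)) \<le> (1/2)^k * (1/2)^l" if l: "l \<in> lab ` F" for l
    proof -
      have inj: "inj_on (\<lambda>m. int m - n) (Fl l)" by (rule inj_onI) simp
      have "(\<Sum>m\<in>Fl l. uu S T (yy l) (int m - n)) = (\<Sum>j\<in>(\<lambda>m. int m - n) ` Fl l. uu S T (yy l) j)"
        by (rule sum.reindex[OF inj, symmetric, unfolded comp_def])
      moreover have "norm (\<Sum>j\<in>(\<lambda>m. int m - n) ` Fl l. uu S T (yy l) j) \<le> (1/2)^(max k l + l)"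
      proof -
        have "tl_ok S T (yy l) (NN (max k l)) ((1/2)^(max k l + l))" by (rule NNtl) simp
        moreover have "finite ((\<lambda>m. int m - n) ` Fl l)" using F(1) unfolding Fl_def by simp
        moreover have "\<forall>j\<in>(\<lambda>m. int m - n) ` Fl l. int (NN (max k l)) < \<bar>j\<bar>"
        proof
          fix j assume "j \<in> (\<lambda>m. int m - n) ` Fl l"
          then obtain m where m: "m \<in> F" "lab m = l" "j = int m - n" unfolding Fl_def by blast
          show "int (NN (max k l)) < \<bar>j\<bar>" using Fc[OF m(1)] m(2,3)
            by (cases "k \<le> l") (simp_all add: max_def)
        qed
        ultimately show ?thesis unfolding tl_ok_def by blast
      qed
      moreover have "(1/2::real)^(max k l + l) \<le> (1/2)^k * (1/2)^l"
        by (simp add: power_add[symmetric] power_decreasing)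
      ultimately show ?thesis by simp
    qed
    have "norm (\<Sum>m\<in>F. uu S T (yy (lab m)) (int m - n))
        \<le> (\<Sum>l\<in>lab ` F. norm (\<Sum>m\<in>Fl l. uu S T (yy l) (int m - n)))"
      unfolding eq by (rule norm_sum)
    also have "\<dots> \<le> (\<Sum>l\<in>lab ` F. (1/2)^k * (1/2)^l)" by (rule sum_mono) (rule inner)
    also have "\<dots> = (1/2)^k * (\<Sum>l\<in>lab ` F. (1/2)^l)" by (simp add: sum_distrib_left)
    also have "\<dots> \<le> (1/2)^k * 2" by (rule mult_left_mono[OF geom_fin_le]) (use F(1) in simp_all)
    finally show ?thesis by simp
  qed
  define z where "z m = (if m \<in> Aset then (S ^^ m) (yy (lab m)) else 0)" for m
  have sumz: "summable z"
    unfolding summable_Cauchy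
  proof (intro allI impI)
    fix e :: real assume e: "0 < e"
    obtain k where k: "(1/2::real)^k < e/2" using real_arch_pow_inv[of "e/2" "1/2::real"] e by auto
    show "\<exists>N. \<forall>m\<ge>N. \<forall>n. norm (sum z {m..<n}) < e"
    proof (intro exI[of _ "Suc (NN k)"] allI impI)
      fix m n :: nat assume m: "Suc (NN k) \<le> m"
      define F where "F = {m..<n} \<inter> Aset"
      have "sum z {m..<n} = sum z F"
        unfolding F_def by (rule sum.mono_neutral_right) (auto simp: z_def)
      also have "\<dots> = (\<Sum>i\<in>F. uu S T (yy (lab i)) (int i - 0))"
        by (rule sum.cong) (auto simp: z_def uu_def F_def)
      finally have eq: "sum z {m..<n} = (\<Sum>i\<in>F. uu S T (yy (lab i)) (int i - 0))" .
      have "norm (\<Sum>i\<in>F. uu S T (yy (lab i)) (int i - 0)) \<le> 2 * (1/2)^k"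
      proof (rule E)
        show "finite F" "F \<subseteq> Aset" unfolding F_def by auto
      next
        fix i assume i: "i \<in> F"
        then have "m \<le> i" unfolding F_def by simp
        moreover have "NN (lab i) < i" using A_min[OF labA] i unfolding F_def by simp
        ultimately show "int (NN k) < \<bar>int i - 0\<bar> \<and> int (NN (lab i)) < \<bar>int i - 0\<bar>" using m by simp
      qed
      then show "norm (sum z {m..<n}) < e" using eq k by simp
    qed
  qed
  define g where "g = suminf z"
  have zg: "z sums g" unfolding g_def using sumz by (rule summable_sums)
  define f where "f = C g"
  have f_dom: "f \<in> dom_inf D T" using C_range unfolding f_def by auto
  have est: "norm ((T ^^ n) f - C (yy k)) \<le> B * (2 * (1/2)^k)" if n: "n \<in> A k" for n k
  proof -
    have n1: "1 \<le> n" using A_min[OF n] by simp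
    have bl: "bounded_linear (\<lambda>x. (T ^^ n) (C x))" by (rule TnC_bdd[OF n1])
    have nA: "n \<in> Aset" using n unfolding Aset_def by blast
    have labn: "lab n = k" by (rule lab[OF n])
    define R where "R m = (T ^^ n) (C (z m))" for m
    have Rsum: "R sums (T ^^ n) f" unfolding R_def f_def by (rule bounded_linear.sums[OF bl zg])
    have R_eq: "R m = (if m \<in> Aset then C (uu S T (yy (lab m)) (int m - int n)) else 0)" for m
    proof (cases "m \<in> Aset")
      case True
      have "lab m \<in> UNIV" by simp
      have "yy (lab m) \<in> Y0" by (rule yy(1))
      then show ?thesis using True unfolding R_def z_def by (simp add: Rz)
    next
      case False
      then show ?thesis unfolding R_def z_def using linear_0[OF bounded_linear.linear[OF bl]] by simp
    qed
    define FM where "FM M = {..<M} \<inter> Aset - {n}" for M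
    have lim: "(\<lambda>M. (\<Sum>m<M. R m) - C (yy k)) \<longlonglongrightarrow> (T ^^ n) f - C (yy k)"
      using Rsum unfolding sums_def by (intro tendsto_diff tendsto_const)
    have ev: "eventually (\<lambda>M. norm ((\<Sum>m<M. R m) - C (yy k)) \<le> B * (2 * (1/2)^k)) sequentially"
      unfolding eventually_sequentially
    proof (intro exI[of _ "Suc n"] allI impI)
      fix M assume M: "Suc n \<le> M"
      have "(\<Sum>m<M. R m) = (\<Sum>m\<in>{..<M} \<inter> Aset. R m)"
        by (rule sum.mono_neutral_right) (auto simp: R_eq)
      also have "\<dots> = R n + (\<Sum>m\<in>FM M. R m)"
        unfolding FM_def by (rule sum.remove) (use M nA in auto)
      also have "R n = C (yy k)" using nA labn by (simp add: R_eq uu_def)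
      also have "(\<Sum>m\<in>FM M. R m) = (\<Sum>m\<in>FM M. C (uu S T (yy (lab m)) (int m - int n)))"
        by (rule sum.cong) (auto simp: R_eq FM_def)
      also have "\<dots> = C (\<Sum>m\<in>FM M. uu S T (yy (lab m)) (int m - int n))"
        by (rule linear_sum[OF bounded_linear.linear[OF C_bdd], symmetric, unfolded comp_def])
      finally have "(\<Sum>m<M. R m) - C (yy k) = C (\<Sum>m\<in>FM M. uu S T (yy (lab m)) (int m - int n))"
        by simp
      moreover have "norm (\<Sum>m\<in>FM M. uu S T (yy (lab m)) (int m - int n)) \<le> 2 * (1/2)^k"
      proof (rule E)
        show "finite (FM M)" "FM M \<subseteq> Aset" unfolding FM_def by auto
      next
        fix m assume m: "m \<in> FM M"
        then have "m \<in> A (lab m)" "m \<noteq> n" using labA unfolding FM_def by auto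
        then show "int (NN k) < \<bar>int m - int n\<bar> \<and> int (NN (lab m)) < \<bar>int m - int n\<bar>"
          using A_sep[of m "lab m" n k] n by auto
      qed
      ultimately show "norm ((\<Sum>m<M. R m) - C (yy k)) \<le> B * (2 * (1/2)^k)"
        using B(2)[of "\<Sum>m\<in>FM M. uu S T (yy (lab m)) (int m - int n)"] B(1)
        by (smt (verit, best) mult.commute mult_left_mono)
    qed
    show ?thesis by (rule Lim_norm_ubound[OF _ lim ev]) simp
  qed
  show ?thesis unfolding freq_hypercyclic_def
  proof (intro exI[of _ f] conjI allI impI)
    show "f \<in> D" using f_dom unfolding dom_inf_iff by (metis funpow_0)
  next
    fix n :: nat show "(T ^^ n) f \<in> D" using f_dom unfolding dom_inf_iff by blast
  next
    fix U :: "'a set" assume U: "open U \<and> U \<noteq> {}"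
    then obtain x where x: "x \<in> U" by blast
    obtain r where r: "r > 0" "ball x r \<subseteq> U" using U x open_contains_ball by blast
    obtain K where K: "(1/2::real)^K < r / (4 * B)"
      using real_arch_pow_inv[of "r / (4 * B)" "1/2::real"] r B(1) by auto
    obtain k where k: "K \<le> k" "dist (C (yy k)) x < r/2" using targets[of "r/2" K x] r by auto
    have "B * (2 * (1/2)^k) \<le> B * (2 * (1/2)^K)"
      using k(1) B(1) by (simp add: power_decreasing)
    also have "\<dots> < B * (2 * (r / (4 * B)))" using K B(1) by (intro mult_strict_left_mono) simp_all
    also have "\<dots> = r/2" using B(1) by simp
    finally have small: "B * (2 * (1/2)^k) < r/2" .
    have sub: "A k \<subseteq> {n. n \<ge> 1 \<and> (T ^^ n) f \<in> U}"
    proof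
      fix n assume n: "n \<in> A k"
      have "dist ((T ^^ n) f) x \<le> dist ((T ^^ n) f) (C (yy k)) + dist (C (yy k)) x"
        by (rule dist_triangle)
      also have "\<dots> < r" using est[OF n] small k(2) by (simp add: dist_norm)
      finally have "(T ^^ n) f \<in> ball x r" by (simp add: dist_commute)
      then show "n \<in> {n. n \<ge> 1 \<and> (T ^^ n) f \<in> U}" using r(2) A_min[OF n] by auto
    qed
    obtain c where c: "c > 0" "eventually (\<lambda>N. c \<le> real (card (A k \<inter> {1..N})) / real N) sequentially"
      using A_dens by blast
    show "lower_density {n. n \<ge> 1 \<and> (T ^^ n) f \<in> U} > 0" by (rule ld_pos[OF sub c])
  qed
qed

end
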